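(* Let $\lambda x.\vec{t}$ be a closed $\lambda$-abstraction. Then $\lambda x.\vec{t}\in[\![\sharp\mathbb{B}\rightarrow\sharp\mathbb{B}]\!]$ if and only if $\lambda x.\vec{t}$ represents a unitary operator $F:\mathbb{C}^2\to\mathbb{C}^2$ (i.e. a linear map with $\langle F(u)|F(v)\rangle=\langle u|v\rangle$ for all $u,v\in\mathbb{C}^2$).
   Context: Calculus. Fix a countably infinite set of variables. Pure values: $v,w::=x\mid\lambda x.\vec{s}\mid *\mid (v_1,v_2)\mid \mathtt{inl}(v)\mid\mathtt{inr}(v)$. Pure terms: $s,t::=v\mid s\,t\mid t;\vec{s}\mid \mathtt{let}\,(x_1,x_2)=t\,\mathtt{in}\,\vec{s}\mid \mathtt{match}\,t\,\{\mathtt{inl}\,x_1\mapsto\vec{s}_1\mid\mathtt{inr}\,x_2\mapsto\vec{s}_2\}$. Term distributions: $\vec{t}::=\vec{0}\mid t\mid \vec{s}+\vec{t}\mid\alpha\cdot\vec{t}$ ($\alpha\in\mathbb{C}$); value distributions are those built only from pure values. Terms are considered up to $\alpha$-conversion. Top-level distributions are considered modulo the congruence $\equiv$ generated by $\vec t+\vec 0\equiv\vec t$, $1\cdot\vec t\equiv\vec t$, $\alpha\cdot(\beta\cdot\vec t)\equiv\alpha\beta\cdot\vec t$, commutativity and associativity of $+$, $(\alpha+\beta)\cdot\vec t\equiv\alpha\cdot\vec t+\beta\cdot\vec t$, $\alpha\cdot(\vec t_1+\vec t_2)\equiv\alpha\cdot\vec t_1+\alpha\cdot\vec t_2$; this congruence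 only goes through $+$ and $\cdot$ and never inside pure terms (bodies of abstractions, sequences, lets, match branches are raw distributions up to $\alpha$-conversion only). In particular $0\cdot t\not\equiv\vec 0$; every distribution has a unique canonical form $\sum_i\alpha_i\cdot t_i$ with pairwise distinct pure terms $t_i$ (coefficients possibly $0$), whose set $\{t_i\}$ is its domain. Constructs are extended by linearity: for $\vec v=\sum_i\alpha_i v_i$, $\vec w=\sum_j\beta_j w_j$, $\vec t=\sum_k\gamma_k t_k$, $\vec s=\sum_l\delta_l s_l$: $(\vec v,\vec w)=\sum_{i,j}\alpha_i\beta_j(v_i,w_j)$, $\mathtt{inl}(\vec v)=\sum_i\alpha_i\mathtt{inl}(v_i)$ (similarly $\mathtt{inr}$), $\vec t\,\vec s=\sum_{k,l}\gamma_k\delta_l\, t_k s_l$, and $\vec t;\vec s$, $\mathtt{let}$, $\mathtt{match}$ are linear in their first argument. $\mathtt{tt}:=\mathtt{inl}( * )$, $\mathtt{ff}:=\mathtt{inr}( * )$. $\vec t[x:=w]$ is substitution of a pure value (linear in $\vec t$); bilinear substitution is $\vec t\langle x:=\vec w\rangle:=\sum_j\beta_j\cdot\vec t[x:=w_j]$ for $\vec w=\sum_j\beta_j w_j$ canonical. Evaluation. Atomic evaluation $t\triangleright\vec t'$: $(\lambda x.\vec t)\,v\triangleright\vec t[x:=v]$; $*;\vec s\triangleright\vec s$; $\mathtt{let}\,(x,y)=(v,w)\,\mathtt{in}\,\vec s\triangleright\vec s[x:=v,y:=w]$; $\mathtt{match}\,\mathtt{inl}(v)\{\ldots\}\triangleright\vec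 s_1[x_1:=v]$; $\mathtt{match}\,\mathtt{inr}(v)\{\ldots\}\triangleright\vec s_2[x_2:=v]$; and if $t\triangleright\vec t'$ then $s\,t\triangleright s\,\vec t'$, $t\,v\triangleright\vec t'\,v$, $t;\vec s\triangleright\vec t';\vec s$, $\mathtt{let}\,(x,y)=t\,\mathtt{in}\,\vec s\triangleright\mathtt{let}\,(x,y)=\vec t'\,\mathtt{in}\,\vec s$, $\mathtt{match}\,t\{\ldots\}\triangleright\mathtt{match}\,\vec t'\{\ldots\}$ (here $v,w$ pure values). One-step evaluation: $\vec t\succ\vec t'$ iff $\vec t\equiv\alpha\cdot s+\vec r$ and $\vec t'\equiv\alpha\cdot\vec s'+\vec r$ with $s\triangleright\vec s'$. Evaluation $\vec t\succ^*\vec t'$ is the reflexive-transitive closure. Semantics. $\vec{\mathcal V}$ is the set of closed value distributions. For $\vec v=\sum_i\alpha_i v_i$, $\vec w=\sum_j\beta_jw_j$ in canonical form, $\langle\vec v|\vec w\rangle=\sum_{i,j}\overline{\alpha_i}\beta_j\delta_{v_i,w_j}$, $\|\vec v\|=\sqrt{\langle\vec v|\vec v\rangle}$, $\mathcal S=\{\vec v:\|\vec v\|=1\}$; $\mathrm{Span}(X)$ is the set of finite linear combinations of elements of $X$. Types include $\mathbb U$, $A+B$, $\sharp A$, $A\rightarrow B$ with $[\![\mathbb U]\!]=\{*\}$, $[\![A+B]\!]=\{\mathtt{inl}(\vec v):\vec v\in[\![A]\!]\}\cup\{\mathtt{inr}(\vec w):\vec w\in[\![B]\!]\}$, $[\![\sharp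 A]\!]=\mathrm{Span}([\![A]\!])\cap\mathcal S$, $[\![A\rightarrow B]\!]=\{\lambda x.\vec t\ \text{closed}:\forall\vec v\in[\![A]\!],\ \vec t\langle x:=\vec v\rangle\Vdash B\}$, where $\vec t\Vdash A$ means $\vec t\succ^*\vec v$ for some $\vec v\in[\![A]\!]$. $\mathbb B:=\mathbb U+\mathbb U$. The Boolean projection $\pi_{\mathbb B}:\mathrm{Span}(\{\mathtt{tt},\mathtt{ff}\})\to\mathbb C^2$ sends $\alpha\cdot\mathtt{tt}\mapsto(\alpha,0)$, $\beta\cdot\mathtt{ff}\mapsto(0,\beta)$, $\alpha\cdot\mathtt{tt}+\beta\cdot\mathtt{ff}\mapsto(\alpha,\beta)$. A closed term distribution $\vec t$ represents $F:\mathbb C^2\to\mathbb C^2$ if for every $\vec v\in\mathrm{Span}(\{\mathtt{tt},\mathtt{ff}\})$ there is $\vec w\in\mathrm{Span}(\{\mathtt{tt},\mathtt{ff}\})$ with $\vec t\,\vec v\succ^*\vec w$ and $\pi_{\mathbb B}(\vec w)=F(\pi_{\mathbb B}(\vec v))$. *)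

theory Defs
  imports Complex_Main
begin

section \<open>Syntax (de Bruijn indices; alpha-conversion is syntactic equality)\<close>

text \<open>An abstraction Lam d binds index 0 in d.
  Let t d binds two variables in d: index 1 is x1 and index 0 is x2.
  Match t d1 d2 binds index 0 in each branch.
  Raw distributions (inside pure terms) are the syntax trees of the grammar,
  with no identification other than alpha-conversion.\<close>

datatype val =
    Var nat
  | Lam dist
  | Star
  | Pair val val
  | Inl val
  | Inr val
and trm =
    Val val
  | App trm trm
  | Seq trm dist
  | Let trm dist
  | Match trm dist dist
and dist =
    DZero
  | DTm trm
  | DPlus dist dist
  | DScale complex dist

section \<open>Congruence on top-level distributions\<close>

inductive deq :: "dist \<Rightarrow> dist \<Rightarrow> bool" where
  deq_refl: "deq a a"
| deq_sym: "deq a b \<Longrightarrow> deq b a"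
| deq_trans: "deq a b \<Longrightarrow> deq b c \<Longrightarrow> deq a c"
| deq_plus_cong: "deq a a' \<Longrightarrow> deq b b' \<Longrightarrow> deq (DPlus a b) (DPlus a' b')"
| deq_scale_cong: "deq a a' \<Longrightarrow> deq (DScale c a) (DScale c a')"
| deq_zero: "deq (DPlus a DZero) a"
| deq_one: "deq (DScale 1 a) a"
| deq_scale_scale: "deq (DScale \<alpha> (DScale \<beta> a)) (DScale (\<alpha> * \<beta>) a)"
| deq_comm: "deq (DPlus a b) (DPlus b a)"
| deq_assoc: "deq (DPlus (DPlus a b) c) (DPlus a (DPlus b c))"
| deq_distr_scalar: "deq (DScale (\<alpha> + \<beta>) a) (DPlus (DScale \<alpha> a) (DScale \<beta> a))"
| deq_distr_vector: "deq (DScale \<alpha> (DPlus a b)) (DPlus (DScale \<alpha> a) (DScale \<alpha> b))"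

text \<open>Canonical form: the domain and the coefficient of each pure term.
  A distribution d is congruent to the sum over t in dsupp d of dcoef d t . t
  (coefficients possibly 0).\<close>

fun dsupp :: "dist \<Rightarrow> trm set" where
  "dsupp DZero = {}"
| "dsupp (DTm t) = {t}"
| "dsupp (DPlus a b) = dsupp a \<union> dsupp b"
| "dsupp (DScale c a) = dsupp a"

fun dcoef :: "dist \<Rightarrow> trm \<Rightarrow> complex" where
  "dcoef DZero t = 0"
| "dcoef (DTm s) t = (if s = t then 1 else 0)"
| "dcoef (DPlus a b) t = dcoef a t + dcoef b t"
| "dcoef (DScale c a) t = c * dcoef a t"

fun mapd :: "(trm \<Rightarrow> trm) \<Rightarrow> dist \<Rightarrow> dist" where
  "mapd f DZero = DZero"
| "mapd f (DTm t) = DTm (f t)"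
| "mapd f (DPlus a b) = DPlus (mapd f a) (mapd f b)"
| "mapd f (DScale c a) = DScale c (mapd f a)"

fun mapvd :: "(val \<Rightarrow> val) \<Rightarrow> dist \<Rightarrow> dist" where
  "mapvd f DZero = DZero"
| "mapvd f (DTm (Val v)) = DTm (Val (f v))"
| "mapvd f (DTm t) = DTm t"
| "mapvd f (DPlus a b) = DPlus (mapvd f a) (mapvd f b)"
| "mapvd f (DScale c a) = DScale c (mapvd f a)"

fun dapp :: "dist \<Rightarrow> dist \<Rightarrow> dist" where
  "dapp DZero e = DZero"
| "dapp (DTm t) e = mapd (\<lambda>s. App t s) e"
| "dapp (DPlus a b) e = DPlus (dapp a e) (dapp b e)"
| "dapp (DScale c a) e = DScale c (dapp a e)"

fun liftv :: "nat \<Rightarrow> val \<Rightarrow> val"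
and liftt :: "nat \<Rightarrow> trm \<Rightarrow> trm"
and liftd :: "nat \<Rightarrow> dist \<Rightarrow> dist" where
  "liftv k (Var n) = Var (if n < k then n else Suc n)"
| "liftv k (Lam d) = Lam (liftd (Suc k) d)"
| "liftv k Star = Star"
| "liftv k (Pair v w) = Pair (liftv k v) (liftv k w)"
| "liftv k (Inl v) = Inl (liftv k v)"
| "liftv k (Inr v) = Inr (liftv k v)"
| "liftt k (Val v) = Val (liftv k v)"
| "liftt k (App s t) = App (liftt k s) (liftt k t)"
| "liftt k (Seq t d) = Seq (liftt k t) (liftd k d)"
| "liftt k (Let t d) = Let (liftt k t) (liftd (Suc (Suc k)) d)"
| "liftt k (Match t d1 d2) = Match (liftt k t) (liftd (Suc k) d1) (liftd (Suc k) d2)"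
| "liftd k DZero = DZero"
| "liftd k (DTm t) = DTm (liftt k t)"
| "liftd k (DPlus a b) = DPlus (liftd k a) (liftd k b)"
| "liftd k (DScale c a) = DScale c (liftd k a)"

fun substv :: "nat \<Rightarrow> val \<Rightarrow> val \<Rightarrow> val"
and substt :: "nat \<Rightarrow> val \<Rightarrow> trm \<Rightarrow> trm"
and substd :: "nat \<Rightarrow> val \<Rightarrow> dist \<Rightarrow> dist" where
  "substv k u (Var n) = (if n = k then u else if k < n then Var (n - 1) else Var n)"
| "substv k u (Lam d) = Lam (substd (Suc k) (liftv 0 u) d)"
| "substv k u Star = Star"
| "substv k u (Pair v w) = Pair (substv k u v) (substv k u w)"
| "substv k u (Inl v) = Inl (substv k u v)"
| "substv k u (Inr v) = Inr (substv k u v)"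
| "substt k u (Val v) = Val (substv k u v)"
| "substt k u (App s t) = App (substt k u s) (substt k u t)"
| "substt k u (Seq t d) = Seq (substt k u t) (substd k u d)"
| "substt k u (Let t d) = Let (substt k u t) (substd (Suc (Suc k)) (liftv 0 (liftv 0 u)) d)"
| "substt k u (Match t d1 d2) =
     Match (substt k u t) (substd (Suc k) (liftv 0 u) d1) (substd (Suc k) (liftv 0 u) d2)"
| "substd k u DZero = DZero"
| "substd k u (DTm t) = DTm (substt k u t)"
| "substd k u (DPlus a b) = DPlus (substd k u a) (substd k u b)"
| "substd k u (DScale c a) = DScale c (substd k u a)"

text \<open>Bilinear substitution d<x := e> for a value distribution e (body d of an
  abstraction, x = index 0); linear extension in e.\<close>
fun bsubst :: "dist \<Rightarrow> dist \<Rightarrow> dist" where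
  "bsubst d DZero = DZero"
| "bsubst d (DTm (Val w)) = substd 0 w d"
| "bsubst d (DTm t) = DZero"
| "bsubst d (DPlus a b) = DPlus (bsubst d a) (bsubst d b)"
| "bsubst d (DScale c a) = DScale c (bsubst d a)"

fun closedv :: "nat \<Rightarrow> val \<Rightarrow> bool"
and closedt :: "nat \<Rightarrow> trm \<Rightarrow> bool"
and closedd :: "nat \<Rightarrow> dist \<Rightarrow> bool" where
  "closedv k (Var n) = (n < k)"
| "closedv k (Lam d) = closedd (Suc k) d"
| "closedv k Star = True"
| "closedv k (Pair v w) = (closedv k v \<and> closedv k w)"
| "closedv k (Inl v) = closedv k v"
| "closedv k (Inr v) = closedv k v"
| "closedt k (Val v) = closedv k v"
| "closedt k (App s t) = (closedt k s \<and> closedt k t)"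
| "closedt k (Seq t d) = (closedt k t \<and> closedd k d)"
| "closedt k (Let t d) = (closedt k t \<and> closedd (Suc (Suc k)) d)"
| "closedt k (Match t d1 d2) = (closedt k t \<and> closedd (Suc k) d1 \<and> closedd (Suc k) d2)"
| "closedd k DZero = True"
| "closedd k (DTm t) = closedt k t"
| "closedd k (DPlus a b) = (closedd k a \<and> closedd k b)"
| "closedd k (DScale c a) = closedd k a"

inductive atom :: "trm \<Rightarrow> dist \<Rightarrow> bool" where
  atom_beta: "atom (App (Val (Lam d)) (Val v)) (substd 0 v d)"
| atom_seq: "atom (Seq (Val Star) d) d"
| atom_let: "atom (Let (Val (Pair v w)) d) (substd 0 v (substd 0 (liftv 0 w) d))"
| atom_match_inl: "atom (Match (Val (Inl v)) d1 d2) (substd 0 v d1)"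
| atom_match_inr: "atom (Match (Val (Inr v)) d1 d2) (substd 0 v d2)"
| atom_app_right: "atom t d \<Longrightarrow> atom (App s t) (mapd (\<lambda>u. App s u) d)"
| atom_app_left: "atom t d \<Longrightarrow> atom (App t (Val v)) (mapd (\<lambda>u. App u (Val v)) d)"
| atom_seq_ctx: "atom t d \<Longrightarrow> atom (Seq t e) (mapd (\<lambda>u. Seq u e) d)"
| atom_let_ctx: "atom t d \<Longrightarrow> atom (Let t e) (mapd (\<lambda>u. Let u e) d)"
| atom_match_ctx: "atom t d \<Longrightarrow> atom (Match t e1 e2) (mapd (\<lambda>u. Match u e1 e2) d)"

definition step :: "dist \<Rightarrow> dist \<Rightarrow> bool" where
  "step d d' \<longleftrightarrow> (\<exists>\<alpha> s s' r. deq d (DPlus (DScale \<alpha> (DTm s)) r) \<and> atom s s'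
                     \<and> deq d' (DPlus (DScale \<alpha> s') r))"

abbreviation steps :: "dist \<Rightarrow> dist \<Rightarrow> bool" where
  "steps \<equiv> step\<^sup>*\<^sup>*"

definition dinner :: "dist \<Rightarrow> dist \<Rightarrow> complex" where
  "dinner v w = (\<Sum>t\<in>dsupp v \<union> dsupp w. cnj (dcoef v t) * dcoef w t)"

definition dnorm :: "dist \<Rightarrow> complex" where
  "dnorm v = csqrt (dinner v v)"

fun lincomb :: "(complex \<times> dist) list \<Rightarrow> dist" where
  "lincomb [] = DZero"
| "lincomb ((c, x) # xs) = DPlus (DScale c x) (lincomb xs)"

definition dspan :: "(dist \<Rightarrow> bool) \<Rightarrow> dist \<Rightarrow> bool" where
  "dspan X d \<longleftrightarrow> (\<exists>xs. (\<forall>p\<in>set xs. X (snd p)) \<and> deq d (lincomb xs))"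

datatype ty = TUnit | TSum ty ty | TSharp ty | TArr ty ty

fun sem :: "ty \<Rightarrow> dist \<Rightarrow> bool" where
  "sem TUnit d = deq d (DTm (Val Star))"
| "sem (TSum A B) d =
     ((\<exists>v. sem A v \<and> deq d (mapvd Inl v)) \<or> (\<exists>w. sem B w \<and> deq d (mapvd Inr w)))"
| "sem (TSharp A) d = (dspan (sem A) d \<and> dnorm d = 1)"
| "sem (TArr A B) d =
     (\<exists>body. deq d (DTm (Val (Lam body))) \<and> closedv 0 (Lam body) \<and>
        (\<forall>v. sem A v \<longrightarrow> (\<exists>w. steps (bsubst body v) w \<and> sem B w)))"

definition TBool :: ty where "TBool = TSum TUnit TUnit"

definition tt :: trm where "tt = Val (Inl Star)"
definition ff :: trm where "ff = Val (Inr Star)"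

definition is_bool_basis :: "dist \<Rightarrow> bool" where
  "is_bool_basis x \<longleftrightarrow> x = DTm tt \<or> x = DTm ff"

definition piB :: "dist \<Rightarrow> complex \<times> complex" where
  "piB w = (dcoef w tt, dcoef w ff)"

definition represents :: "dist \<Rightarrow> (complex \<times> complex \<Rightarrow> complex \<times> complex) \<Rightarrow> bool" where
  "represents t F \<longleftrightarrow>
     (\<forall>v. dspan is_bool_basis v \<longrightarrow>
        (\<exists>w. dspan is_bool_basis w \<and> steps (dapp t v) w \<and> piB w = F (piB v)))"

definition c2add :: "complex \<times> complex \<Rightarrow> complex \<times> complex \<Rightarrow> complex \<times> complex" where
  "c2add u v = (fst u + fst v, snd u + snd v)"
definition c2scale :: "complex \<Rightarrow> complex \<times> complex \<Rightarrow> complex \<times> complex" where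
  "c2scale c u = (c * fst u, c * snd u)"
definition c2inner :: "complex \<times> complex \<Rightarrow> complex \<times> complex \<Rightarrow> complex" where
  "c2inner u v = cnj (fst u) * fst v + cnj (snd u) * snd v"
definition c2linear :: "(complex \<times> complex \<Rightarrow> complex \<times> complex) \<Rightarrow> bool" where
  "c2linear F \<longleftrightarrow> (\<forall>u v. F (c2add u v) = c2add (F u) (F v)) \<and> (\<forall>c u. F (c2scale c u) = c2scale c (F u))"
definition unitary2 :: "(complex \<times> complex \<Rightarrow> complex \<times> complex) \<Rightarrow> bool" where
  "unitary2 F \<longleftrightarrow> c2linear F \<and> (\<forall>u v. c2inner (F u) (F v) = c2inner u v)"

end

theory Submission
  imports Defs
begin


declare deq_trans[trans]

lemma finite_dsupp[simp]: "finite (dsupp d)"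
  by (induction d) auto

lemma dcoef_out: "t \<notin> dsupp d \<Longrightarrow> dcoef d t = 0"
  by (induction d) auto

lemma deq_sound: "deq a b \<Longrightarrow> dsupp a = dsupp b \<and> dcoef a = dcoef b"
  by (induction rule: deq.induct) (auto simp: algebra_simps fun_eq_iff)

lemma deq_supp: "deq a b \<Longrightarrow> dsupp a = dsupp b" using deq_sound by blast
lemma deq_coef: "deq a b \<Longrightarrow> dcoef a x = dcoef b x" using deq_sound by metis

fun dbind :: "(trm \<Rightarrow> dist) \<Rightarrow> dist \<Rightarrow> dist" where
  "dbind g DZero = DZero"
| "dbind g (DTm t) = g t"
| "dbind g (DPlus a b) = DPlus (dbind g a) (dbind g b)"
| "dbind g (DScale c a) = DScale c (dbind g a)"

lemma dbind_supp: "dsupp (dbind g d) = (\<Union>t\<in>dsupp d. dsupp (g t))"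
  by (induction d) auto

lemma sum_ext:
  assumes "finite S" "dsupp d \<subseteq> S"
  shows "(\<Sum>t\<in>dsupp d. dcoef d t * f t) = (\<Sum>t\<in>S. dcoef d t * f t)"
  by (rule sum.mono_neutral_left) (use assms dcoef_out in auto)

lemma dbind_coef: "dcoef (dbind g d) x = (\<Sum>t\<in>dsupp d. dcoef d t * dcoef (g t) x)"
proof (induction d rule: dsupp.induct)
  case (3 a b)
  let ?S = "dsupp a \<union> dsupp b"
  have "dcoef (dbind g (DPlus a b)) x = (\<Sum>t\<in>?S. dcoef a t * dcoef (g t) x) + (\<Sum>t\<in>?S. dcoef b t * dcoef (g t) x)"
    using 3 sum_ext[of ?S a] sum_ext[of ?S b] by simp
  also have "\<dots> = (\<Sum>t\<in>?S. dcoef (DPlus a b) t * dcoef (g t) x)"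
    by (simp add: sum.distrib algebra_simps)
  finally show ?case by simp
qed (auto simp: sum_distrib_left mult.assoc)

lemma dbind_deq: "deq a b \<Longrightarrow> deq (dbind g a) (dbind g b)"
  by (induction rule: deq.induct) (auto intro: deq.intros)

lemma dbind_DTm: "dbind DTm d = d"
  by (induction d rule: dsupp.induct) auto

lemma mapd_dbind: "mapd f d = dbind (\<lambda>t. DTm (f t)) d"
  by (induction d rule: dsupp.induct) auto

lemma mapvd_dbind: "mapvd f d = dbind (\<lambda>t. case t of Val v \<Rightarrow> DTm (Val (f v)) | _ \<Rightarrow> DTm t) d"
  by (induction f d rule: mapvd.induct) auto

lemma bsubst_dbind: "bsubst b d = dbind (\<lambda>t. case t of Val v \<Rightarrow> substd 0 v b | _ \<Rightarrow> DZero) d"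
  by (induction b d rule: bsubst.induct) auto

lemma step_plus_left: "step a a' \<Longrightarrow> step (DPlus a r) (DPlus a' r)"
  unfolding step_def
proof (elim exE conjE)
  fix \<alpha> s s' r0
  assume h: "deq a (DPlus (DScale \<alpha> (DTm s)) r0)" "atom s s'" "deq a' (DPlus (DScale \<alpha> s') r0)"
  have "deq (DPlus a r) (DPlus (DScale \<alpha> (DTm s)) (DPlus r0 r))"
    using deq_trans[OF deq_plus_cong[OF h(1) deq_refl] deq_assoc] .
  moreover have "deq (DPlus a' r) (DPlus (DScale \<alpha> s') (DPlus r0 r))"
    using deq_trans[OF deq_plus_cong[OF h(3) deq_refl] deq_assoc] .
  ultimately show "\<exists>\<alpha> s s' r'. deq (DPlus a r) (DPlus (DScale \<alpha> (DTm s)) r') \<and> atom s s' \<and> deq (DPlus a' r) (DPlus (DScale \<alpha> s') r')"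
    using h(2) by blast
qed

lemma step_deq_left: "deq a b \<Longrightarrow> step b c \<Longrightarrow> step a c"
  unfolding step_def by (blast intro: deq_trans)
lemma step_deq_right: "deq c b \<Longrightarrow> step a b \<Longrightarrow> step a c"
  unfolding step_def by (blast intro: deq_trans)

lemma step_plus_right: "step a a' \<Longrightarrow> step (DPlus r a) (DPlus r a')"
  by (rule step_deq_left[OF deq_comm], rule step_deq_right[OF deq_comm], erule step_plus_left)

lemma step_scale: "step a a' \<Longrightarrow> step (DScale c a) (DScale c a')"
  unfolding step_def
proof (elim exE conjE)
  fix \<alpha> s s' r0
  assume h: "deq a (DPlus (DScale \<alpha> (DTm s)) r0)" "atom s s'" "deq a' (DPlus (DScale \<alpha> s') r0)"
  have "deq (DScale c a) (DPlus (DScale (c*\<alpha>) (DTm s)) (DScale c r0))"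
    using deq_trans[OF deq_trans[OF deq_scale_cong[OF h(1)] deq_distr_vector] deq_plus_cong[OF deq_scale_scale deq_refl]] .
  moreover have "deq (DScale c a') (DPlus (DScale (c*\<alpha>) s') (DScale c r0))"
    using deq_trans[OF deq_trans[OF deq_scale_cong[OF h(3)] deq_distr_vector] deq_plus_cong[OF deq_scale_scale deq_refl]] .
  ultimately show "\<exists>\<alpha> s s' r'. deq (DScale c a) (DPlus (DScale \<alpha> (DTm s)) r') \<and> atom s s' \<and> deq (DScale c a') (DPlus (DScale \<alpha> s') r')"
    using h(2) by blast
qed

lemma steps_plus: "steps a a' \<Longrightarrow> steps b b' \<Longrightarrow> steps (DPlus a b) (DPlus a' b')"
proof -
  assume "steps a a'" "steps b b'"
  have "steps (DPlus a b) (DPlus a' b)" using \<open>steps a a'\<close>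
    by (induction rule: rtranclp_induct) (auto intro: rtranclp.rtrancl_into_rtrancl step_plus_left)
  moreover have "steps (DPlus a' b) (DPlus a' b')" using \<open>steps b b'\<close>
    by (induction rule: rtranclp_induct) (auto intro: rtranclp.rtrancl_into_rtrancl step_plus_right)
  ultimately show ?thesis by simp
qed

lemma steps_scale: "steps a a' \<Longrightarrow> steps (DScale c a) (DScale c a')"
  by (induction rule: rtranclp_induct) (auto intro: rtranclp.rtrancl_into_rtrancl step_scale)

lemma dbind_steps: "(\<And>t. t \<in> dsupp d \<Longrightarrow> steps (g t) (g' t)) \<Longrightarrow> steps (dbind g d) (dbind g' d)"
  by (induction d rule: dsupp.induct) (auto intro: steps_plus steps_scale)

lemma step_atom: "atom s d \<Longrightarrow> step (DTm s) d"
  unfolding step_def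
  by (rule exI[of _ 1], rule exI[of _ s], rule exI[of _ d], rule exI[of _ DZero])
     (auto intro: deq_sym[OF deq_trans[OF deq_zero deq_one]] deq_sym)

lemma steps_deq: "deq a b \<Longrightarrow> steps b w \<Longrightarrow> \<exists>w'. steps a w' \<and> deq w' w"
proof -
  assume d: "deq a b" and s: "steps b w"
  from s show ?thesis
  proof (cases rule: converse_rtranclpE)
    assume "b = w" then show ?thesis using d by blast
  next
    fix y assume "step b y" "steps y w" then show ?thesis using d step_deq_left
      by (meson converse_rtranclp_into_rtranclp deq_refl)
  qed
qed



lemma scale_zero: "deq (DScale c DZero) DZero"
proof -
  let ?X = "DScale c DZero" and ?Y = "DScale (-c) DZero"
  have z0: "deq (DScale 0 DZero) DZero"
  proof -
    have "deq (DScale 0 DZero) (DPlus (DScale 0 DZero) DZero)" by (rule deq_sym, rule deq_zero)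
    also have "deq \<dots> (DPlus DZero (DScale 0 DZero))" by (rule deq_comm)
    also have "deq \<dots> (DPlus (DScale 1 DZero) (DScale 0 DZero))" by (rule deq_plus_cong[OF deq_sym[OF deq_one] deq_refl])
    also have "deq \<dots> (DScale 1 DZero)" using deq_sym[OF deq_distr_scalar[of 1 0 DZero]] by simp
    also have "deq \<dots> DZero" by (rule deq_one)
    finally show ?thesis .
  qed
  have xx: "deq ?X (DPlus ?X ?X)"
    using deq_trans[OF deq_scale_cong[OF deq_sym[OF deq_zero[of DZero]]] deq_distr_vector] .
  have xy: "deq (DPlus ?X ?Y) DZero"
    using deq_trans[OF deq_sym[OF deq_distr_scalar[of c "-c" DZero]] ] z0 by simp
  have "deq ?X (DPlus ?X DZero)" by (rule deq_sym, rule deq_zero)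
  also have "deq \<dots> (DPlus ?X (DPlus ?X ?Y))" by (rule deq_plus_cong[OF deq_refl deq_sym[OF xy]])
  also have "deq \<dots> (DPlus (DPlus ?X ?X) ?Y)" by (rule deq_sym, rule deq_assoc)
  also have "deq \<dots> (DPlus ?X ?Y)" by (rule deq_plus_cong[OF deq_sym[OF xx] deq_refl])
  also have "deq \<dots> DZero" by (rule xy)
  finally show ?thesis .
qed

lemma supp_empty_deq: "dsupp d = {} \<Longrightarrow> deq d DZero"
proof (induction d rule: dsupp.induct)
  case 1 show ?case by (rule deq_refl)
next
  case (3 a b) then show ?case
    using deq_trans[OF deq_plus_cong[of a DZero b DZero] deq_zero] by simp
next
  case (4 c a) then show ?case
    using deq_trans[OF deq_scale_cong scale_zero] by simp
qed simp

lemma swap4: "deq (DPlus (DPlus x y) (DPlus z w)) (DPlus (DPlus x z) (DPlus y w))"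
proof -
  have "deq (DPlus (DPlus x y) (DPlus z w)) (DPlus x (DPlus y (DPlus z w)))" by (rule deq_assoc)
  also have "deq \<dots> (DPlus x (DPlus (DPlus y z) w))" by (rule deq_plus_cong[OF deq_refl deq_sym[OF deq_assoc]])
  also have "deq \<dots> (DPlus x (DPlus (DPlus z y) w))" by (rule deq_plus_cong[OF deq_refl deq_plus_cong[OF deq_comm deq_refl]])
  also have "deq \<dots> (DPlus x (DPlus z (DPlus y w)))" by (rule deq_plus_cong[OF deq_refl deq_assoc])
  also have "deq \<dots> (DPlus (DPlus x z) (DPlus y w))" by (rule deq_sym[OF deq_assoc])
  finally show ?thesis .
qed

lemma extr: "t \<in> dsupp d \<Longrightarrow> \<exists>r. deq d (DPlus (DScale (dcoef d t) (DTm t)) r) \<and> dsupp r = dsupp d - {t}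
   \<and> (\<forall>x. x \<noteq> t \<longrightarrow> dcoef r x = dcoef d x)"
proof (induction d rule: dsupp.induct)
  case (2 s)
  then have "s = t" by simp
  then show ?case
    by (intro exI[of _ DZero]) (auto intro!: deq_sym[OF deq_trans[OF deq_zero deq_one]])
next
  case (4 c a)
  then obtain r where r: "deq a (DPlus (DScale (dcoef a t) (DTm t)) r)" "dsupp r = dsupp a - {t}"
    "\<forall>x. x \<noteq> t \<longrightarrow> dcoef r x = dcoef a x" by auto
  have "deq (DScale c a) (DPlus (DScale (c * dcoef a t) (DTm t)) (DScale c r))"
    using deq_trans[OF deq_trans[OF deq_scale_cong[OF r(1)] deq_distr_vector] deq_plus_cong[OF deq_scale_scale deq_refl]] .
  then show ?case using r by (intro exI[of _ "DScale c r"]) auto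
next
  case (3 a b)
  show ?case
  proof (cases "t \<in> dsupp a")
    case ta: True
    then obtain r where r: "deq a (DPlus (DScale (dcoef a t) (DTm t)) r)" "dsupp r = dsupp a - {t}"
      "\<forall>x. x \<noteq> t \<longrightarrow> dcoef r x = dcoef a x" using 3 by auto
    show ?thesis
    proof (cases "t \<in> dsupp b")
      case tb: True
      then obtain r2 where r2: "deq b (DPlus (DScale (dcoef b t) (DTm t)) r2)" "dsupp r2 = dsupp b - {t}"
        "\<forall>x. x \<noteq> t \<longrightarrow> dcoef r2 x = dcoef b x" using 3 by auto
      have "deq (DPlus a b) (DPlus (DPlus (DScale (dcoef a t) (DTm t)) r) (DPlus (DScale (dcoef b t) (DTm t)) r2))"
        by (rule deq_plus_cong[OF r(1) r2(1)])
      also have "deq \<dots> (DPlus (DPlus (DScale (dcoef a t) (DTm t)) (DScale (dcoef b t) (DTm t))) (DPlus r r2))"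
        by (rule swap4)
      also have "deq \<dots> (DPlus (DScale (dcoef a t + dcoef b t) (DTm t)) (DPlus r r2))"
        by (rule deq_plus_cong[OF deq_sym[OF deq_distr_scalar] deq_refl])
      finally show ?thesis using r r2 by (intro exI[of _ "DPlus r r2"]) auto
    next
      case tb: False
      have "deq (DPlus a b) (DPlus (DPlus (DScale (dcoef a t) (DTm t)) r) b)"
        by (rule deq_plus_cong[OF r(1) deq_refl])
      also have "deq \<dots> (DPlus (DScale (dcoef a t) (DTm t)) (DPlus r b))" by (rule deq_assoc)
      finally show ?thesis using r tb dcoef_out[OF tb] by (intro exI[of _ "DPlus r b"]) auto
    qed
  next
    case ta: False
    then have tb: "t \<in> dsupp b" using 3 by simp
    then obtain r2 where r2: "deq b (DPlus (DScale (dcoef b t) (DTm t)) r2)" "dsupp r2 = dsupp b - {t}"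
      "\<forall>x. x \<noteq> t \<longrightarrow> dcoef r2 x = dcoef b x" using 3 by auto
    have "deq (DPlus a b) (DPlus b a)" by (rule deq_comm)
    also have "deq \<dots> (DPlus (DPlus (DScale (dcoef b t) (DTm t)) r2) a)"
      by (rule deq_plus_cong[OF r2(1) deq_refl])
    also have "deq \<dots> (DPlus (DScale (dcoef b t) (DTm t)) (DPlus r2 a))" by (rule deq_assoc)
    finally show ?thesis using r2 ta dcoef_out[OF ta] by (intro exI[of _ "DPlus r2 a"]) auto
  qed
qed simp

lemma complete_aux: "card (dsupp d) = n \<Longrightarrow> dsupp d = dsupp d' \<Longrightarrow> (\<forall>x. dcoef d x = dcoef d' x) \<Longrightarrow> deq d d'"
proof (induction n arbitrary: d d')
  case 0
  then have "dsupp d = {}" "dsupp d' = {}" by auto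
  then show ?case using supp_empty_deq deq_sym deq_trans by metis
next
  case (Suc n)
  have "dsupp d \<noteq> {}" using Suc.prems(1) by auto
  then obtain t where t: "t \<in> dsupp d" by blast
  obtain r where r: "deq d (DPlus (DScale (dcoef d t) (DTm t)) r)" "dsupp r = dsupp d - {t}"
      "\<forall>x. x \<noteq> t \<longrightarrow> dcoef r x = dcoef d x" using extr[OF t] by blast
  obtain r' where r': "deq d' (DPlus (DScale (dcoef d' t) (DTm t)) r')" "dsupp r' = dsupp d' - {t}"
      "\<forall>x. x \<noteq> t \<longrightarrow> dcoef r' x = dcoef d' x" using extr[of t d'] t Suc.prems by blast
  have "card (dsupp r) = n" using r(2) t Suc.prems by simp
  moreover have "\<forall>x. dcoef r x = dcoef r' x"
  proof
    fix x show "dcoef r x = dcoef r' x"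
    proof (cases "x = t")
      case True then show ?thesis using r(2) r'(2) dcoef_out[of t r] dcoef_out[of t r'] by simp
    next
      case False then show ?thesis using r(3) r'(3) Suc.prems(3) by simp
    qed
  qed
  ultimately have "deq r r'" using Suc.IH r(2) r'(2) Suc.prems by auto
  then have "deq (DPlus (DScale (dcoef d t) (DTm t)) r) (DPlus (DScale (dcoef d' t) (DTm t)) r')"
    using Suc.prems by (auto intro: deq_plus_cong deq_refl)
  then show ?case using r(1) r'(1) by (meson deq_sym deq_trans)
qed

lemma complete: "dsupp d = dsupp d' \<Longrightarrow> (\<And>x. dcoef d x = dcoef d' x) \<Longrightarrow> deq d d'"
  using complete_aux[OF refl, of d d'] by simp

lemma lincomb_supp: "dsupp (lincomb xs) = (\<Union>p\<in>set xs. dsupp (snd p))"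
  by (induction xs rule: lincomb.induct) auto

lemma lincomb_canon_coef: "distinct ts \<Longrightarrow> dcoef (lincomb (map (\<lambda>t. (f t, DTm t)) ts)) x = (if x \<in> set ts then f x else 0)"
  by (induction ts) auto

lemma canon: "\<exists>ts. set ts = dsupp d \<and> deq d (lincomb (map (\<lambda>t. (dcoef d t, DTm t)) ts))"
proof -
  obtain ts where ts: "set ts = dsupp d" "distinct ts" using finite_distinct_list[OF finite_dsupp[of d]] by (elim exE conjE)
  have s1: "dsupp d = dsupp (lincomb (map (\<lambda>t. (dcoef d t, DTm t)) ts))"
    by (simp add: lincomb_supp ts(1))
  have s2: "dcoef d x = dcoef (lincomb (map (\<lambda>t. (dcoef d t, DTm t)) ts)) x" for x
    by (simp add: lincomb_canon_coef ts dcoef_out)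
  have "deq d (lincomb (map (\<lambda>t. (dcoef d t, DTm t)) ts))"
    by (rule complete[OF s1 s2])
  then show ?thesis using ts by blast
qed

lemma tt_ne_ff[simp]: "tt \<noteq> ff" "ff \<noteq> tt" by (auto simp: tt_def ff_def)

lemma span_tf:
  assumes "\<And>x. X x \<Longrightarrow> dsupp x \<subseteq> {tt, ff}" "X (DTm tt)" "X (DTm ff)"
  shows "dspan X d \<longleftrightarrow> dsupp d \<subseteq> {tt, ff}"
proof
  assume "dspan X d"
  then obtain xs where "\<forall>p\<in>set xs. X (snd p)" "deq d (lincomb xs)" unfolding dspan_def by blast
  then show "dsupp d \<subseteq> {tt, ff}" using deq_supp lincomb_supp assms(1) by fastforce
next
  assume h: "dsupp d \<subseteq> {tt, ff}"
  obtain ts where ts: "set ts = dsupp d" "deq d (lincomb (map (\<lambda>t. (dcoef d t, DTm t)) ts))" using canon by blast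
  have "\<forall>p\<in>set (map (\<lambda>t. (dcoef d t, DTm t)) ts). X (snd p)" using ts h assms(2,3) by auto
  then show "dspan X d" using ts unfolding dspan_def by blast
qed

lemma semB_iff: "sem TBool x \<longleftrightarrow> deq x (DTm tt) \<or> deq x (DTm ff)"
proof -
  have m: "deq v (DTm (Val Star)) \<Longrightarrow> deq (mapvd f v) (DTm (Val (f Star)))" for f v
    using dbind_deq[of v "DTm (Val Star)" "\<lambda>t. case t of Val v \<Rightarrow> DTm (Val (f v)) | _ \<Rightarrow> DTm t"] by (simp add: mapvd_dbind)
  show ?thesis
    unfolding TBool_def
    apply (simp add: tt_def ff_def)
    apply (rule iffI)
     apply (metis m deq_trans)
    apply (metis deq_refl mapvd.simps(2))
    done
qed

lemma span_bool: "dspan is_bool_basis d \<longleftrightarrow> dsupp d \<subseteq> {tt, ff}"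
  by (rule span_tf) (auto simp: is_bool_basis_def)

lemma span_semB: "dspan (sem TBool) d \<longleftrightarrow> dsupp d \<subseteq> {tt, ff}"
  by (rule span_tf) (auto simp: semB_iff dest: deq_supp intro: deq_refl)



lemma atom_val: "\<not> atom (Val v) d"
  by (auto elim: atom.cases)

lemma atom_det: "atom s d \<Longrightarrow> atom s d' \<Longrightarrow> d = d'"
proof (induction arbitrary: d' rule: atom.induct)
qed (erule atom.cases; auto simp: atom_val)+

inductive Tr :: "trm \<Rightarrow> trm set \<Rightarrow> (trm \<Rightarrow> complex) \<Rightarrow> bool" where
  Tr_val: "Tr (Val v) {Val v} (\<lambda>x. if x = Val v then 1 else 0)"
| Tr_step: "atom s d \<Longrightarrow> (\<forall>u\<in>dsupp d. Tr u (Sf u) (rf u)) \<Longrightarrow>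
     Tr s (\<Union>u\<in>dsupp d. Sf u) (\<lambda>x. \<Sum>u\<in>dsupp d. dcoef d u * rf u x)"

lemma Tr_uniq: "Tr s S r \<Longrightarrow> Tr s S' r' \<Longrightarrow> S = S' \<and> r = r'"
proof (induction arbitrary: S' r' rule: Tr.induct)
  case (Tr_val v)
  then show ?case by (cases rule: Tr.cases) (auto simp: atom_val)
next
  case (Tr_step s d Sf rf)
  from Tr_step.prems show ?case
  proof (cases rule: Tr.cases)
    case (Tr_val v) then show ?thesis using Tr_step.hyps atom_val by simp
  next
    case (Tr_step d' Sf' rf')
    then have dd: "d' = d" using atom_det \<open>atom s d\<close> by blast
    have "\<forall>u\<in>dsupp d. Sf u = Sf' u \<and> rf u = rf' u" using Tr_step.IH Tr_step dd by blast
    then show ?thesis using Tr_step dd by (auto intro!: SUP_cong sum.cong)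
  qed
qed

definition term_ok :: "trm \<Rightarrow> bool" where "term_ok t \<longleftrightarrow> (\<exists>S r. Tr t S r)"
definition TRp :: "trm \<Rightarrow> trm set \<times> (trm \<Rightarrow> complex)" where
  "TRp t = (THE p. Tr t (fst p) (snd p))"
definition FS :: "trm \<Rightarrow> trm set" where "FS t = fst (TRp t)"
definition RR :: "trm \<Rightarrow> trm \<Rightarrow> complex" where "RR t = snd (TRp t)"

lemma Tr_FS_RR: "Tr t S r \<Longrightarrow> FS t = S \<and> RR t = r"
proof -
  assume h: "Tr t S r"
  have "TRp t = (S, r)" unfolding TRp_def
  proof (rule the_equality)
    show "Tr t (fst (S, r)) (snd (S, r))" using h by simp
    fix p assume "Tr t (fst p) (snd p)"
    then show "p = (S, r)" using Tr_uniq[OF h] by (metis prod.collapse)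
  qed
  then show ?thesis by (simp add: FS_def RR_def)
qed

lemma term_Tr: "term_ok t \<Longrightarrow> Tr t (FS t) (RR t)"
  unfolding term_ok_def using Tr_FS_RR by blast

definition allval :: "dist \<Rightarrow> bool" where "allval w \<longleftrightarrow> (\<forall>t\<in>dsupp w. \<exists>v. t = Val v)"

definition NN :: "dist \<Rightarrow> trm \<Rightarrow> complex" where
  "NN d x = (\<Sum>t\<in>dsupp d. dcoef d t * RR t x)"

lemma NN_deq: "deq a b \<Longrightarrow> NN a = NN b"
  unfolding NN_def using deq_sound by (metis)

lemma steps_unique:
  assumes "steps d w" "allval w"
  shows "(\<forall>t\<in>dsupp d. term_ok t) \<and> dsupp w = (\<Union>t\<in>dsupp d. FS t) \<and> (\<forall>x. dcoef w x = NN d x)"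
  using assms(1)
proof (induction rule: converse_rtranclp_induct)
  case base
  have tv: "\<forall>t\<in>dsupp w. Tr t {t} (\<lambda>x. if x = t then 1 else 0)"
    using assms(2) unfolding allval_def by (auto intro: Tr_val)
  then have 1: "\<forall>t\<in>dsupp w. term_ok t" unfolding term_ok_def by blast
  have fs: "\<forall>t\<in>dsupp w. FS t = {t} \<and> RR t = (\<lambda>x. if x = t then 1 else 0)" using tv Tr_FS_RR by blast
  have 2: "dsupp w = (\<Union>t\<in>dsupp w. FS t)" using fs by auto
  have 3: "dcoef w x = NN w x" for x
  proof -
    have "NN w x = (\<Sum>t\<in>dsupp w. dcoef w t * (if x = t then 1 else 0))"
      unfolding NN_def using fs by (intro sum.cong) auto
    also have "\<dots> = (if x \<in> dsupp w then dcoef w x else 0)"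
      by (simp add: if_distrib sum.delta cong: if_cong)
    also have "\<dots> = dcoef w x" using dcoef_out by auto
    finally show ?thesis by simp
  qed
  show ?case using 1 2 3 by blast
next
  case (step d d1)
  from step.hyps(1) obtain \<alpha> s s' r where
    h: "deq d (DPlus (DScale \<alpha> (DTm s)) r)" "atom s s'" "deq d1 (DPlus (DScale \<alpha> s') r)"
    unfolding step_def by blast
  have sd: "dsupp d = insert s (dsupp r)" "\<And>x. dcoef d x = \<alpha> * (if s = x then 1 else 0) + dcoef r x"
    using deq_sound[OF h(1)] by auto
  have sd1: "dsupp d1 = dsupp s' \<union> dsupp r" "\<And>x. dcoef d1 x = \<alpha> * dcoef s' x + dcoef r x"
    using deq_sound[OF h(3)] by auto
  from step.IH have IH1: "\<forall>t\<in>dsupp d1. term_ok t" and IH2: "dsupp w = (\<Union>t\<in>dsupp d1. FS t)"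
    and IH3: "\<forall>x. dcoef w x = NN d1 x" by auto
  have "\<forall>u\<in>dsupp s'. Tr u (FS u) (RR u)" using IH1 sd1 term_Tr by auto
  then have trs: "Tr s (\<Union>u\<in>dsupp s'. FS u) (\<lambda>x. \<Sum>u\<in>dsupp s'. dcoef s' u * RR u x)"
    using Tr_step[OF h(2)] by blast
  then have fss: "FS s = (\<Union>u\<in>dsupp s'. FS u)" "RR s = (\<lambda>x. \<Sum>u\<in>dsupp s'. dcoef s' u * RR u x)"
    using Tr_FS_RR by auto
  have 1: "\<forall>t\<in>dsupp d. term_ok t" using trs IH1 sd sd1 unfolding term_ok_def by auto
  have 2: "dsupp w = (\<Union>t\<in>dsupp d. FS t)" using IH2 sd sd1 fss by auto
  have 3: "dcoef w x = NN d x" for x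
  proof -
    let ?S = "insert s (dsupp r \<union> dsupp s')"
    have fin: "finite ?S" by simp
    have "NN d x = (\<Sum>t\<in>?S. dcoef d t * RR t x)"
      unfolding NN_def by (rule sum_ext) (use sd in auto)
    also have "\<dots> = (\<Sum>t\<in>?S. \<alpha> * (if s = t then RR t x else 0)) + (\<Sum>t\<in>?S. dcoef r t * RR t x)"
    proof -
      have "dcoef d t * RR t x = \<alpha> * (if s = t then RR t x else 0) + dcoef r t * RR t x" for t
        by (simp add: sd(2) algebra_simps)
      then show ?thesis by (simp add: sum.distrib)
    qed
    also have "(\<Sum>t\<in>?S. \<alpha> * (if s = t then RR t x else 0)) = \<alpha> * RR s x"
      by (simp add: sum_distrib_left[symmetric] sum.delta)
    also have "RR s x = (\<Sum>t\<in>?S. dcoef s' t * RR t x)"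
      unfolding fss by (rule sum_ext) auto
    finally have A: "NN d x = \<alpha> * (\<Sum>t\<in>?S. dcoef s' t * RR t x) + (\<Sum>t\<in>?S. dcoef r t * RR t x)" .
    have "NN d1 x = (\<Sum>t\<in>?S. dcoef d1 t * RR t x)"
      unfolding NN_def by (rule sum_ext) (use sd1 in auto)
    also have "\<dots> = \<alpha> * (\<Sum>t\<in>?S. dcoef s' t * RR t x) + (\<Sum>t\<in>?S. dcoef r t * RR t x)"
      by (simp add: sd1(2) sum.distrib algebra_simps sum_distrib_left)
    finally show ?thesis using A IH3 by simp
  qed
  show ?case using 1 2 3 by blast
qed

lemma Tr_steps: "Tr s S r \<Longrightarrow> \<exists>w. steps (DTm s) w \<and> dsupp w = S \<and> (\<forall>x. dcoef w x = r x) \<and> allval w"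
proof (induction rule: Tr.induct)
  case (Tr_val v)
  show ?case by (intro exI[of _ "DTm (Val v)"]) (auto simp: allval_def)
next
  case (Tr_step s d Sf rf)
  then obtain wf where wf: "\<forall>u\<in>dsupp d. steps (DTm u) (wf u) \<and> dsupp (wf u) = Sf u \<and> (\<forall>x. dcoef (wf u) x = rf u x) \<and> allval (wf u)"
    by metis
  have "steps d (dbind wf d)" using dbind_steps[of d DTm wf] wf by (simp add: dbind_DTm)
  then have "steps (DTm s) (dbind wf d)" using step_atom[OF Tr_step.hyps(1)] by (simp add: converse_rtranclp_into_rtranclp)
  moreover have "dsupp (dbind wf d) = (\<Union>u\<in>dsupp d. Sf u)" using wf by (simp add: dbind_supp)
  moreover have "dcoef (dbind wf d) x = (\<Sum>u\<in>dsupp d. dcoef d u * rf u x)" for x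
    using wf by (simp add: dbind_coef)
  moreover have "allval (dbind wf d)" using wf by (auto simp: allval_def dbind_supp)
  ultimately show ?case by blast
qed

lemma dist_steps:
  assumes "\<forall>t\<in>dsupp d. term_ok t"
  shows "\<exists>w. steps d w \<and> dsupp w = (\<Union>t\<in>dsupp d. FS t) \<and> (\<forall>x. dcoef w x = NN d x) \<and> allval w"
proof -
  from assms have "\<forall>t\<in>dsupp d. \<exists>w. steps (DTm t) w \<and> dsupp w = FS t \<and> (\<forall>x. dcoef w x = RR t x) \<and> allval w"
    using Tr_steps term_Tr by blast
  then obtain wf where wf: "\<forall>t\<in>dsupp d. steps (DTm t) (wf t) \<and> dsupp (wf t) = FS t \<and> (\<forall>x. dcoef (wf t) x = RR t x) \<and> allval (wf t)"
    by metis
  have "steps d (dbind wf d)" using dbind_steps[of d DTm wf] wf by (simp add: dbind_DTm)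
  moreover have "dsupp (dbind wf d) = (\<Union>u\<in>dsupp d. FS u)" using wf by (simp add: dbind_supp)
  moreover have "dcoef (dbind wf d) x = NN d x" for x
    using wf by (simp add: dbind_coef NN_def)
  moreover have "allval (dbind wf d)" using wf by (auto simp: allval_def dbind_supp)
  ultimately show ?thesis by blast
qed



lemma dinner_tf:
  assumes "dsupp a \<subseteq> {tt, ff}" "dsupp b \<subseteq> {tt, ff}"
  shows "dinner a b = c2inner (piB a) (piB b)"
proof -
  have "dinner a b = (\<Sum>t\<in>{tt, ff}. cnj (dcoef a t) * dcoef b t)"
    unfolding dinner_def by (rule sum.mono_neutral_left) (use assms dcoef_out in auto)
  then show ?thesis by (simp add: c2inner_def piB_def)
qed

lemma dnorm1: "dnorm d = 1 \<longleftrightarrow> dinner d d = 1"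
  unfolding dnorm_def by (metis csqrt_1 power2_csqrt power_one)

lemma semSB: "sem (TSharp TBool) v \<longleftrightarrow> dsupp v \<subseteq> {tt, ff} \<and> c2inner (piB v) (piB v) = 1"
  by (auto simp: span_semB dnorm1 dinner_tf)

lemma allval_tf: "dsupp w \<subseteq> {tt, ff} \<Longrightarrow> allval w"
  by (auto simp: allval_def tt_def ff_def)

lemma dapp_dbind: "dapp (DTm s) v = dbind (\<lambda>u. DTm (App s u)) v"
  by (simp add: mapd_dbind)

lemma NN_DTm: "NN (DTm s) x = RR s x" by (simp add: NN_def)

lemma NN_dbind: "NN (dbind g d) x = (\<Sum>t\<in>dsupp d. dcoef d t * NN (g t) x)"
proof -
  let ?U = "dsupp (dbind g d)"
  have "NN (dbind g d) x = (\<Sum>u\<in>?U. \<Sum>t\<in>dsupp d. dcoef d t * (dcoef (g t) u * RR u x))"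
    unfolding NN_def dbind_coef by (simp add: sum_distrib_right mult.assoc)
  also have "\<dots> = (\<Sum>t\<in>dsupp d. dcoef d t * (\<Sum>u\<in>?U. dcoef (g t) u * RR u x))"
    by (subst sum.swap) (simp add: sum_distrib_left)
  also have "\<dots> = (\<Sum>t\<in>dsupp d. dcoef d t * NN (g t) x)"
    unfolding NN_def
    by (intro sum.cong refl arg_cong[where f="\<lambda>z. _ * z"] sum_ext[symmetric]) (auto simp: dbind_supp)
  finally show ?thesis .
qed

lemma coef_tf:
  assumes "dsupp v \<subseteq> {tt, ff}"
  shows "(\<Sum>t\<in>dsupp v. dcoef v t * f t) = dcoef v tt * f tt + dcoef v ff * f ff"
  using sum_ext[of "{tt, ff}" v f] assms by simp

lemma alg:
  fixes a1 b1 a2 b2 :: complex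
  assumes n1: "cnj a1 * a1 + cnj b1 * b1 = 1" and n2: "cnj a2 * a2 + cnj b2 * b2 = 1"
    and h: "\<And>c c'. cnj c * c + cnj c' * c' = 1 \<Longrightarrow>
      cnj (c*a1 + c'*a2) * (c*a1 + c'*a2) + cnj (c*b1 + c'*b2) * (c*b1 + c'*b2) = 1"
  shows "cnj a1 * a2 + cnj b1 * b2 = 0"
proof -
  define r where "r = complex_of_real (1 / sqrt 2)"
  have rr: "r * r = 1/2" unfolding r_def
    by (metis of_real_mult of_real_divide of_real_1 of_real_numeral real_sqrt_divide real_sqrt_mult_self real_sqrt_one times_divide_eq_left mult_1 real_sqrt_pow2 power2_eq_square zero_le_numeral divide_divide_eq_left)
  have cr: "cnj r = r" unfolding r_def by simp
  define z where "z = cnj a1 * a2 + cnj b1 * b2"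
  have cz: "cnj z = a1 * cnj a2 + b1 * cnj b2" unfolding z_def by simp
  have e1: "cnj r * r + cnj r * r = 1" by (simp add: cr rr)
  have ii: "cnj (\<i> * r) * (\<i> * r) = r * r" by (simp add: cr algebra_simps)
  have e2: "cnj r * r + cnj (\<i> * r) * (\<i> * r) = 1" unfolding ii by (simp add: cr rr)
  have E1: "r * r * ((cnj a1 * a1 + cnj b1 * b1) + (cnj a2 * a2 + cnj b2 * b2) + z + cnj z) = 1"
    using h[OF e1] unfolding z_def cz by (simp add: cr algebra_simps)
  have E2: "r * r * ((cnj a1 * a1 + cnj b1 * b1) + (cnj a2 * a2 + cnj b2 * b2) + \<i> * z - \<i> * cnj z) = 1"
    using h[OF e2] unfolding z_def cz by (simp add: cr algebra_simps)
  have E1': "1/2 * (1 + 1 + z + cnj z) = 1" using E1 unfolding n1 n2 rr .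
  have E2': "1/2 * (1 + 1 + \<i> * z - \<i> * cnj z) = 1" using E2 unfolding n1 n2 rr .
  have "z + cnj z = 0" using E1' by (simp add: field_simps)
  moreover have "\<i> * (z - cnj z) = 0" using E2' by (simp add: field_simps)
  then have "z - cnj z = 0" by simp
  ultimately have s0: "(z + cnj z) + (z - cnj z) = 0" by simp
  have "(z + cnj z) + (z - cnj z) = 2 * z" by simp
  then have "z = 0" using s0 by simp
  then show ?thesis unfolding z_def .
qed



lemma inv_beta:
  assumes "Tr (App (Val (Lam body)) (Val b)) S r"
  shows "(\<forall>u\<in>dsupp (substd 0 b body). term_ok u) \<and> S = (\<Union>u\<in>dsupp (substd 0 b body). FS u)
         \<and> (\<forall>x. r x = NN (substd 0 b body) x)"
  using assms
proof (cases rule: Tr.cases)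
  case (Tr_step d Sf rf)
  have dd: "d = substd 0 b body" using atom_det[OF Tr_step(3) atom_beta] .
  have t: "\<forall>u\<in>dsupp d. term_ok u \<and> Sf u = FS u \<and> rf u = RR u"
    using Tr_step(4) Tr_FS_RR unfolding term_ok_def by metis
  show ?thesis using Tr_step t unfolding dd NN_def by auto
qed

lemma piB_DTm_tt: "piB (DTm tt) = (1, 0)" by (simp add: piB_def)
lemma piB_DTm_ff: "piB (DTm ff) = (0, 1)" by (simp add: piB_def)

lemma bwd:
  assumes U: "unitary2 F" and R: "represents (DTm (Val (Lam body))) F" and V: "sem (TSharp TBool) v"
  shows "\<exists>w. steps (bsubst body v) w \<and> sem (TSharp TBool) w"
proof -
  let ?L = "Val (Lam body)"
  define G where "G = (\<lambda>t. case t of Val b \<Rightarrow> substd 0 b body | _ \<Rightarrow> DZero)"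
  have sv: "dsupp v \<subseteq> {tt, ff}" and nv: "c2inner (piB v) (piB v) = 1" using V semSB by auto
  have "dspan is_bool_basis v" using sv span_bool by simp
  then obtain w where w: "dspan is_bool_basis w" "steps (dapp (DTm ?L) v) w" "piB w = F (piB v)"
    using R unfolding represents_def by blast
  have sw: "dsupp w \<subseteq> {tt, ff}" using w(1) span_bool by simp
  define A where "A = dbind (\<lambda>u. DTm (App ?L u)) v"
  have sA: "dsupp A = (\<Union>t\<in>dsupp v. {App ?L t})" unfolding A_def by (simp add: dbind_supp)
  have "steps A w" using w(2) unfolding A_def by (simp add: mapd_dbind)
  from steps_unique[OF this allval_tf[OF sw]] have U1: "\<forall>a\<in>dsupp A. term_ok a"
    and U2: "dsupp w = (\<Union>a\<in>dsupp A. FS a)" and U3: "\<forall>x. dcoef w x = NN A x" by auto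
  have P: "(\<forall>u\<in>dsupp (G t). term_ok u) \<and> FS (App ?L t) = (\<Union>u\<in>dsupp (G t). FS u)
      \<and> (\<forall>x. RR (App ?L t) x = NN (G t) x)" if t: "t \<in> dsupp v" for t
  proof -
    obtain b where b: "t = Val b" using t sv by (auto simp: tt_def ff_def)
    have "term_ok (App ?L t)" using U1 sA t by auto
    from inv_beta[OF term_Tr[OF this[unfolded b]]] show ?thesis unfolding b G_def by simp
  qed
  define B where "B = dbind G v"
  have sB: "dsupp B = (\<Union>t\<in>dsupp v. dsupp (G t))" unfolding B_def by (simp add: dbind_supp)
  have "\<forall>u\<in>dsupp B. term_ok u" using P sB by auto
  from dist_steps[OF this] obtain w' where w': "steps B w'" "dsupp w' = (\<Union>u\<in>dsupp B. FS u)"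
    "\<forall>x. dcoef w' x = NN B x" by blast
  have sw': "dsupp w' = dsupp w" using w'(2) sB U2 sA P by auto
  have cw: "dcoef w' x = dcoef w x" for x
  proof -
    have "NN B x = (\<Sum>t\<in>dsupp v. dcoef v t * NN (G t) x)" unfolding B_def by (rule NN_dbind)
    also have "\<dots> = (\<Sum>t\<in>dsupp v. dcoef v t * NN (DTm (App ?L t)) x)"
      using P by (intro sum.cong refl) (simp add: NN_DTm)
    also have "\<dots> = NN A x" unfolding A_def by (rule NN_dbind[symmetric])
    finally show ?thesis using w'(3) U3 by simp
  qed
  have "piB w' = piB w" by (simp add: piB_def cw)
  moreover have "\<forall>a b. c2inner (F a) (F b) = c2inner a b" using U unfolding unitary2_def by blast
  ultimately have "c2inner (piB w') (piB w') = 1" using w(3) nv by metis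
  then have "sem (TSharp TBool) w'" using semSB sw' sw by simp
  moreover have "bsubst body v = B" unfolding B_def G_def by (rule bsubst_dbind)
  ultimately show ?thesis using w'(1) by auto
qed



lemma fwd:
  assumes S: "\<forall>v. sem (TSharp TBool) v \<longrightarrow> (\<exists>w. steps (bsubst body v) w \<and> sem (TSharp TBool) w)"
  shows "\<exists>F. unitary2 F \<and> represents (DTm (Val (Lam body))) F"
proof -
  let ?L = "Val (Lam body)"
  define G where "G = (\<lambda>t. case t of Val b \<Rightarrow> substd 0 b body | _ \<Rightarrow> DZero)"
  have bs: "bsubst body d = dbind G d" for d unfolding G_def by (rule bsubst_dbind)
  have "sem (TSharp TBool) (DTm tt)" by (simp only: semSB) (simp add: piB_DTm_tt c2inner_def)
  then obtain W1 where W1: "steps (G tt) W1" "sem (TSharp TBool) W1" using S bs by fastforce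
  have "sem (TSharp TBool) (DTm ff)" by (simp only: semSB) (simp add: piB_DTm_ff c2inner_def)
  then obtain W2 where W2: "steps (G ff) W2" "sem (TSharp TBool) W2" using S bs by fastforce
  have s1: "dsupp W1 \<subseteq> {tt, ff}" and n1: "c2inner (piB W1) (piB W1) = 1" using W1 semSB by auto
  have s2: "dsupp W2 \<subseteq> {tt, ff}" and n2: "c2inner (piB W2) (piB W2) = 1" using W2 semSB by auto
  define p1 where "p1 = piB W1"
  define p2 where "p2 = piB W2"
  define G' where "G' = (\<lambda>t. if t = tt then W1 else if t = ff then W2 else G t)"
  have GG': "steps (G t) (G' t)" for t unfolding G'_def using W1 W2 by auto
  have key: "c2inner (c2add (c2scale c p1) (c2scale c' p2)) (c2add (c2scale c p1) (c2scale c' p2)) = 1"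
    if cc: "cnj c * c + cnj c' * c' = 1" for c c'
  proof -
    define V where "V = DPlus (DScale c (DTm tt)) (DScale c' (DTm ff))"
    have sV: "dsupp V = {tt, ff}" unfolding V_def by auto
    have pV: "piB V = (c, c')" unfolding V_def piB_def by simp
    have "sem (TSharp TBool) V" using sV pV cc by (simp only: semSB) (simp add: c2inner_def)
    then obtain w where w: "steps (dbind G V) w" "sem (TSharp TBool) w" using S bs by metis
    have sw: "dsupp w \<subseteq> {tt, ff}" and nw: "c2inner (piB w) (piB w) = 1" using w(2) semSB by auto
    have st: "steps (dbind G V) (dbind G' V)" by (rule dbind_steps) (rule GG')
    have "dsupp (dbind G' V) \<subseteq> {tt, ff}" using s1 s2 sV by (auto simp: dbind_supp G'_def)
    from steps_unique[OF st allval_tf[OF this]] steps_unique[OF w(1) allval_tf[OF sw]]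
    have cw: "dcoef w x = dcoef (dbind G' V) x" for x by simp
    have "dcoef (dbind G' V) x = c * dcoef W1 x + c' * dcoef W2 x" for x
      by (simp add: dbind_coef sV G'_def V_def)
    then have "piB w = c2add (c2scale c p1) (c2scale c' p2)"
      by (simp add: piB_def cw c2add_def c2scale_def p1_def p2_def)
    then show ?thesis using nw by simp
  qed
  obtain a1 b1 where p1e: "p1 = (a1, b1)" by fastforce
  obtain a2 b2 where p2e: "p2 = (a2, b2)" by fastforce
  have orth: "cnj a1 * a2 + cnj b1 * b2 = 0"
  proof (rule alg)
    show "cnj a1 * a1 + cnj b1 * b1 = 1" using n1 unfolding p1_def[symmetric] p1e c2inner_def by simp
    show "cnj a2 * a2 + cnj b2 * b2 = 1" using n2 unfolding p2_def[symmetric] p2e c2inner_def by simp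
    fix c c' assume "cnj c * c + cnj c' * c' = 1"
    from key[OF this] show "cnj (c*a1 + c'*a2) * (c*a1 + c'*a2) + cnj (c*b1 + c'*b2) * (c*b1 + c'*b2) = 1"
      unfolding p1e p2e c2inner_def c2add_def c2scale_def by simp
  qed
  have nn1: "cnj a1 * a1 + cnj b1 * b1 = 1" using n1 unfolding p1_def[symmetric] p1e c2inner_def by simp
  have nn2: "cnj a2 * a2 + cnj b2 * b2 = 1" using n2 unfolding p2_def[symmetric] p2e c2inner_def by simp
  define F where "F = (\<lambda>u. c2add (c2scale (fst u) p1) (c2scale (snd u) p2))"
  have lin: "c2linear F" unfolding c2linear_def F_def by (auto simp: c2add_def c2scale_def algebra_simps)
  have inner: "c2inner (F u) (F v) = c2inner u v" for u v
  proof -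
    obtain u1 u2 where u: "u = (u1, u2)" by fastforce
    obtain v1 v2 where v: "v = (v1, v2)" by fastforce
    have "c2inner (F u) (F v) = cnj u1 * v1 * (cnj a1 * a1 + cnj b1 * b1) + cnj u1 * v2 * (cnj a1 * a2 + cnj b1 * b2)
       + cnj u2 * v1 * cnj (cnj a1 * a2 + cnj b1 * b2) + cnj u2 * v2 * (cnj a2 * a2 + cnj b2 * b2)"
      unfolding F_def u v p1e p2e c2inner_def c2add_def c2scale_def by (simp add: algebra_simps)
    also have "\<dots> = c2inner u v" unfolding orth nn1 nn2 u v c2inner_def by simp
    finally show ?thesis .
  qed
  have U: "unitary2 F" unfolding unitary2_def using lin inner by blast
  have R: "represents (DTm ?L) F" unfolding represents_def
  proof (intro allI impI)
    fix v assume "dspan is_bool_basis v"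
    then have sv: "dsupp v \<subseteq> {tt, ff}" using span_bool by simp
    define H where "H = (\<lambda>t. if t = tt then W1 else if t = ff then W2 else DZero)"
    have "steps (DTm (App ?L t)) (H t)" if t: "t \<in> dsupp v" for t
    proof -
      have "t = tt \<or> t = ff" using t sv by auto
      then show ?thesis
      proof
        assume tt: "t = tt"
        have "step (DTm (App ?L t)) (G tt)" unfolding tt G_def tt_def by (simp add: step_atom atom_beta)
        then show ?thesis using W1(1) tt H_def by (simp add: converse_rtranclp_into_rtranclp)
      next
        assume ff: "t = ff"
        have "step (DTm (App ?L t)) (G ff)" unfolding ff G_def ff_def by (simp add: step_atom atom_beta)
        then show ?thesis using W2(1) ff H_def by (simp add: converse_rtranclp_into_rtranclp)
      qed
    qed
    then have st: "steps (dapp (DTm ?L) v) (dbind H v)" unfolding dapp_dbind by (rule dbind_steps)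
    have "dsupp (dbind H v) \<subseteq> {tt, ff}" using s1 s2 by (auto simp: dbind_supp H_def split: if_splits)
    then have sp: "dspan is_bool_basis (dbind H v)" using span_bool by simp
    have "dcoef (dbind H v) x = dcoef v tt * dcoef W1 x + dcoef v ff * dcoef W2 x" for x
      unfolding dbind_coef coef_tf[OF sv] by (simp add: H_def)
    then have "piB (dbind H v) = F (piB v)"
      by (simp add: piB_def F_def c2add_def c2scale_def p1_def p2_def)
    then show "\<exists>w. dspan is_bool_basis w \<and> steps (dapp (DTm ?L) v) w \<and> piB w = F (piB v)"
      using sp st by blast
  qed
  show ?thesis using U R by blast
qed

theorem mainTheorem1:
  fixes body :: dist
  assumes "closedv 0 (Lam body)"
  shows "sem (TArr (TSharp TBool) (TSharp TBool)) (DTm (Val (Lam body)))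
    \<longleftrightarrow> (\<exists>F. unitary2 F \<and> represents (DTm (Val (Lam body))) F)"
proof
  assume "sem (TArr (TSharp TBool) (TSharp TBool)) (DTm (Val (Lam body)))"
  then obtain body' where b: "deq (DTm (Val (Lam body))) (DTm (Val (Lam body')))"
    "\<forall>v. sem (TSharp TBool) v \<longrightarrow> (\<exists>w. steps (bsubst body' v) w \<and> sem (TSharp TBool) w)"
    by auto
  have "body' = body" using deq_supp[OF b(1)] by simp
  then show "\<exists>F. unitary2 F \<and> represents (DTm (Val (Lam body))) F" using fwd b(2) by simp
next
  assume "\<exists>F. unitary2 F \<and> represents (DTm (Val (Lam body))) F"
  then obtain F where "unitary2 F" "represents (DTm (Val (Lam body))) F" by blast
  then show "sem (TArr (TSharp TBool) (TSharp TBool)) (DTm (Val (Lam body)))"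
  proof -
    have "\<forall>v. sem (TSharp TBool) v \<longrightarrow> (\<exists>w. steps (bsubst body v) w \<and> sem (TSharp TBool) w)"
      using bwd[OF \<open>unitary2 F\<close> \<open>represents (DTm (Val (Lam body))) F\<close>] by blast
    then show ?thesis unfolding sem.simps(4) using assms deq_refl by blast
  qed
qed

end
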